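(* Let $(E,\delta)$ be a non-empty separable metric space, let $M\in\mathbb N$, $\varepsilon,L,D\in(0,\infty)$, let $(\Omega,\mathcal F,\mathbb P)$ be a probability space, let $X_{x,m}\colon\Omega\to\mathbb R$, $x\in E$, $m\in\{1,\dots,M\}$, and $Y_m\colon\Omega\to\mathbb R$, $m\in\{1,\dots,M\}$, be functions, assume for every $x\in E$ that $(X_{x,m},Y_m)$, $m\in\{1,\dots,M\}$, are i.i.d. random variables, assume $|X_{x,m}-X_{y,m}|\le L\delta(x,y)$ and $|X_{x,m}-Y_m|\le D$ for all $x,y\in E$, $m\in\{1,\dots,M\}$, let $\mathfrak E_x=\frac1M\sum_{m=1}^M|X_{x,m}-Y_m|^2$ and $\mathcal E_x=\mathbb E[|X_{x,1}-Y_1|^2]$ for $x\in E$. Then $\Omega\ni\omega\mapsto\sup_{x\in E}|\mathfrak E_x(\omega)-\mathcal E_x|\in[0,\infty]$ is $\mathcal F/\mathcal B([0,\infty])$-measurable and $$\mathbb P\bigl(\sup_{x\in E}|\mathfrak E_x-\mathcal E_x|\ge\varepsilon\bigr)\le 2\,\mathcal C_{(E,\delta),\frac{\varepsilon}{8LD}}\exp\Bigl(\frac{-\varepsilon^2M}{2D^4}\Bigr).$$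
   Context: Covering number: for a metric space $(E,\delta)$ and $r\in[0,\infty]$, $\mathcal C_{(E,\delta),r}=\inf(\{n\in\mathbb N_0\colon\exists A\subseteq E \text{ with } |A|\le n \text{ and } \forall x\in E\ \exists a\in A\colon\delta(a,x)\le r\}\cup\{\infty\})$. *)

theory Defs
  imports "HOL-Probability.Probability"
begin

definition covering_number :: "'a set \<Rightarrow> ('a \<Rightarrow> 'a \<Rightarrow> real) \<Rightarrow> real \<Rightarrow> enat" where
  "covering_number E \<delta> r =
     (INF n \<in> {n::nat. \<exists>A. A \<subseteq> E \<and> finite A \<and> card A \<le> n \<and> (\<forall>x\<in>E. \<exists>a\<in>A. \<delta> a x \<le> r)}. enat n)"

end

theory Submission
  imports Defs "HOL-Probability.Hoeffding"
begin


lemma sq_lip_aux: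
  fixes a b D K :: real
  assumes "\<bar>a\<bar> \<le> D" "\<bar>b\<bar> \<le> D" "\<bar>a - b\<bar> \<le> K"
  shows "\<bar>\<bar>a\<bar>^2 - \<bar>b\<bar>^2\<bar> \<le> 2 * D * K"
proof -
  have "\<bar>\<bar>a\<bar>^2 - \<bar>b\<bar>^2\<bar> = \<bar>a - b\<bar> * \<bar>a + b\<bar>"
    by (simp add: power2_eq_square abs_mult[symmetric] algebra_simps)
  also have "\<dots> \<le> K * (2 * D)"
    using assms by (intro mult_mono) auto
  finally show ?thesis by (simp add: mult_ac)
qed

theorem lemma3p19:
  fixes E :: "'e set" and \<delta> :: "'e \<Rightarrow> 'e \<Rightarrow> real"
    and M :: nat and \<epsilon> L D :: real
    and P :: "'w measure"
    and X :: "'e \<Rightarrow> nat \<Rightarrow> 'w \<Rightarrow> real" and Y :: "nat \<Rightarrow> 'w \<Rightarrow> real"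
  assumes metric: "Metric_space E \<delta>"
    and separable: "separable_space (Metric_space.mtopology E \<delta>)"
    and nonempty: "E \<noteq> {}"
    and M_pos: "M \<ge> 1"
    and eps_pos: "\<epsilon> > 0" and L_pos: "L > 0" and D_pos: "D > 0"
    and prob: "prob_space P"
    and indep: "\<And>x. x \<in> E \<Longrightarrow>
        prob_space.indep_vars P (\<lambda>_. borel) (\<lambda>m \<omega>. (X x m \<omega>, Y m \<omega>)) {1..M}"
    and ident: "\<And>x m. x \<in> E \<Longrightarrow> m \<in> {1..M} \<Longrightarrow>
        distr P borel (\<lambda>\<omega>. (X x m \<omega>, Y m \<omega>)) = distr P borel (\<lambda>\<omega>. (X x 1 \<omega>, Y 1 \<omega>))"
    and lip: "\<And>x y m \<omega>. x \<in> E \<Longrightarrow> y \<in> E \<Longrightarrow> m \<in> {1..M} \<Longrightarrow> \<omega> \<in> space P \<Longrightarrow>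
        \<bar>X x m \<omega> - X y m \<omega>\<bar> \<le> L * \<delta> x y"
    and bdd: "\<And>x m \<omega>. x \<in> E \<Longrightarrow> m \<in> {1..M} \<Longrightarrow> \<omega> \<in> space P \<Longrightarrow>
        \<bar>X x m \<omega> - Y m \<omega>\<bar> \<le> D"
  defines "emp \<equiv> (\<lambda>x \<omega>. (1 / real M) * (\<Sum>m\<in>{1..M}. \<bar>X x m \<omega> - Y m \<omega>\<bar> ^ 2))"
    and "gen \<equiv> (\<lambda>x. prob_space.expectation P (\<lambda>\<omega>. \<bar>X x 1 \<omega> - Y 1 \<omega>\<bar> ^ 2))"
  shows "(\<lambda>\<omega>. SUP x\<in>E. ennreal \<bar>emp x \<omega> - gen x\<bar>) \<in> borel_measurable P \<and>
         emeasure P {\<omega> \<in> space P. (SUP x\<in>E. ennreal \<bar>emp x \<omega> - gen x\<bar>) \<ge> ennreal \<epsilon>}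
         \<le> 2 * ennreal_of_enat (covering_number E \<delta> (\<epsilon> / (8 * L * D)))
             * ennreal (exp (- (\<epsilon> ^ 2 * real M) / (2 * D ^ 4)))"
proof -
  interpret P: prob_space P by (rule prob)
  interpret ms: Metric_space E \<delta> by (rule metric)
  have M1: "1 \<in> {1..M}" using M_pos by simp
  define Z where "Z = (\<lambda>x m \<omega>. \<bar>X x m \<omega> - Y m \<omega>\<bar>^2)"
  define h where "h = (\<lambda>p::real\<times>real. \<bar>fst p - snd p\<bar>^2)"
  have h_meas: "h \<in> borel_measurable borel"
    unfolding h_def by (intro borel_measurable_continuous_onI continuous_intros)
  have pair_meas: "(\<lambda>\<omega>. (X x m \<omega>, Y m \<omega>)) \<in> borel_measurable P" if "x \<in> E" "m \<in> {1..M}" for x m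
    using indep[OF that(1)] that(2) unfolding P.indep_vars_def by blast
  have Z_eq: "Z x m = (\<lambda>\<omega>. h (X x m \<omega>, Y m \<omega>))" for x m by (simp add: Z_def h_def)
  have Z_meas: "Z x m \<in> borel_measurable P" if "x \<in> E" "m \<in> {1..M}" for x m
    unfolding Z_eq using measurable_compose[OF pair_meas[OF that] h_meas] .
  have Z_bd: "Z x m \<omega> \<in> {0..D^2}" if "x \<in> E" "m \<in> {1..M}" "\<omega> \<in> space P" for x m \<omega>
  proof -
    have "\<bar>X x m \<omega> - Y m \<omega>\<bar>^2 \<le> D^2"
      by (rule power_mono) (use bdd[OF that] in auto)
    then show ?thesis unfolding Z_def by simp
  qed
  have Z_lip: "\<bar>Z x m \<omega> - Z y m \<omega>\<bar> \<le> 2 * D * (L * \<delta> x y)"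
    if "x \<in> E" "y \<in> E" "m \<in> {1..M}" "\<omega> \<in> space P" for x y m \<omega>
    unfolding Z_def
    by (rule sq_lip_aux) (use bdd[of x m \<omega>] bdd[of y m \<omega>] lip[of x y m \<omega>] that in auto)
  have Z_int: "integrable P (Z x 1)" if "x \<in> E" for x
    by (rule P.integrable_const_bound[where B="D^2"])
       (use Z_bd[OF that M1] Z_meas[OF that M1] in auto)
  have emp_lip: "\<bar>emp x \<omega> - emp y \<omega>\<bar> \<le> 2 * D * (L * \<delta> x y)"
    if "x \<in> E" "y \<in> E" "\<omega> \<in> space P" for x y \<omega>
  proof -
    have "\<bar>\<Sum>m\<in>{1..M}. (Z x m \<omega> - Z y m \<omega>)\<bar> \<le> (\<Sum>m\<in>{1..M}. 2 * D * (L * \<delta> x y))"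
      by (rule order_trans[OF sum_abs]) (intro sum_mono Z_lip, use that in auto)
    then have 1: "\<bar>\<Sum>m\<in>{1..M}. (Z x m \<omega> - Z y m \<omega>)\<bar> \<le> real M * (2 * D * (L * \<delta> x y))"
      by simp
    have "emp x \<omega> - emp y \<omega> = (\<Sum>m\<in>{1..M}. (Z x m \<omega> - Z y m \<omega>)) / real M"
      by (simp add: emp_def Z_def sum_subtractf diff_divide_distrib)
    then have "\<bar>emp x \<omega> - emp y \<omega>\<bar> = \<bar>\<Sum>m\<in>{1..M}. (Z x m \<omega> - Z y m \<omega>)\<bar> / real M"
      by simp
    also have "\<dots> \<le> 2 * D * (L * \<delta> x y)"
      using 1 M_pos by (simp add: divide_le_eq mult.commute)
    finally show ?thesis .
  qed
  have gen_lip: "\<bar>gen x - gen y\<bar> \<le> 2 * D * (L * \<delta> x y)" if "x \<in> E" "y \<in> E" for x y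
  proof -
    have "gen x - gen y = P.expectation (\<lambda>\<omega>. Z x 1 \<omega> - Z y 1 \<omega>)"
      using Z_int[OF that(1)] Z_int[OF that(2)] by (simp add: gen_def Z_def)
    also have "\<bar>\<dots>\<bar> \<le> P.expectation (\<lambda>\<omega>. \<bar>Z x 1 \<omega> - Z y 1 \<omega>\<bar>)"
      by (rule integral_abs_bound)
    also have "\<dots> \<le> P.expectation (\<lambda>\<omega>. 2 * D * (L * \<delta> x y))"
      by (rule integral_mono) (use Z_int[OF that(1)] Z_int[OF that(2)] Z_lip[OF that M1] in auto)
    also have "\<dots> = 2 * D * (L * \<delta> x y)" by (simp add: P.prob_space)
    finally show ?thesis .
  qed
  define f where "f = (\<lambda>x \<omega>. \<bar>emp x \<omega> - gen x\<bar>)"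
  have f_nn: "f x \<omega> \<ge> 0" for x \<omega> by (simp add: f_def)
  have f_lip: "\<bar>f x \<omega> - f y \<omega>\<bar> \<le> 4 * D * L * \<delta> x y"
    if "x \<in> E" "y \<in> E" "\<omega> \<in> space P" for x y \<omega>
  proof -
    have "\<bar>f x \<omega> - f y \<omega>\<bar> \<le> \<bar>(emp x \<omega> - gen x) - (emp y \<omega> - gen y)\<bar>"
      unfolding f_def by (rule abs_triangle_ineq3)
    also have "\<dots> \<le> \<bar>emp x \<omega> - emp y \<omega>\<bar> + \<bar>gen x - gen y\<bar>" by linarith
    also have "\<dots> \<le> 4 * D * L * \<delta> x y"
      using emp_lip[OF that] gen_lip[OF that(1,2)] by linarith
    finally show ?thesis .
  qed
  have f_meas: "f x \<in> borel_measurable P" if "x \<in> E" for x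
  proof -
    have [measurable]: "(\<lambda>\<omega>. \<Sum>m\<in>{1..M}. Z x m \<omega>) \<in> borel_measurable P"
      by (rule borel_measurable_sum) (rule Z_meas[OF that])
    have "f x = (\<lambda>\<omega>. \<bar>(1 / real M) * (\<Sum>m\<in>{1..M}. Z x m \<omega>) - gen x\<bar>)"
      by (simp add: f_def emp_def Z_def)
    also have "\<dots> \<in> borel_measurable P" by measurable
    finally show ?thesis .
  qed
  have fe_meas: "(\<lambda>\<omega>. ennreal (f x \<omega>)) \<in> borel_measurable P" if "x \<in> E" for x
    using f_meas[OF that] by measurable
  obtain C where C: "countable C" "C \<subseteq> E" "ms.mtopology closure_of C = E"
    using separable unfolding separable_space_def ms.topspace_mtopology by blast
  have dense: "\<exists>y\<in>C. \<delta> x y < r" if xr: "x \<in> E" "r > 0" for x r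
  proof -
    have "x \<in> ms.mtopology closure_of C" using C(3) xr(1) by simp
    then obtain y where "y \<in> C" "y \<in> ms.mball x r"
      unfolding ms.metric_closure_of using xr(2) by blast
    then show ?thesis by auto
  qed
  have SUP_eq: "(SUP x\<in>E. ennreal (f x \<omega>)) = (SUP x\<in>C. ennreal (f x \<omega>))"
    if \<omega>: "\<omega> \<in> space P" for \<omega>
  proof (rule antisym)
    show "(SUP x\<in>C. ennreal (f x \<omega>)) \<le> (SUP x\<in>E. ennreal (f x \<omega>))"
      by (rule SUP_subset_mono[OF C(2) order_refl])
    show "(SUP x\<in>E. ennreal (f x \<omega>)) \<le> (SUP x\<in>C. ennreal (f x \<omega>))"
    proof (rule SUP_least)
      fix x assume x: "x \<in> E"
      show "ennreal (f x \<omega>) \<le> (SUP x\<in>C. ennreal (f x \<omega>))"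
      proof (rule ennreal_le_epsilon)
        fix e :: real assume e: "0 < e"
        have K: "4 * D * L > 0" using D_pos L_pos by simp
        obtain y where y: "y \<in> C" "\<delta> x y < e / (4 * D * L)"
          using dense[OF x, of "e / (4 * D * L)"] e K by auto
        have yE: "y \<in> E" using y(1) C(2) by auto
        have "4 * D * L * \<delta> x y \<le> e"
          using y(2) K by (simp add: field_simps)
        then have "f x \<omega> \<le> f y \<omega> + e"
          using f_lip[OF x yE \<omega>] by linarith
        then have "ennreal (f x \<omega>) \<le> ennreal (f y \<omega> + e)" by (rule ennreal_leI)
        also have "\<dots> = ennreal (f y \<omega>) + ennreal e"
          using f_nn e by (simp add: ennreal_plus)
        also have "\<dots> \<le> (SUP x\<in>C. ennreal (f x \<omega>)) + ennreal e"
          by (intro add_right_mono SUP_upper y(1))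
        finally show "ennreal (f x \<omega>) \<le> (SUP x\<in>C. ennreal (f x \<omega>)) + ennreal e" .
      qed
    qed
  qed
  have meas: "(\<lambda>\<omega>. SUP x\<in>E. ennreal (f x \<omega>)) \<in> borel_measurable P"
  proof -
    have "(\<lambda>\<omega>. SUP x\<in>C. ennreal (f x \<omega>)) \<in> borel_measurable P"
      by (rule borel_measurable_SUP[OF C(1)]) (use fe_meas C(2) in auto)
    then show ?thesis
      using measurable_cong[of P "\<lambda>\<omega>. SUP x\<in>E. ennreal (f x \<omega>)" "\<lambda>\<omega>. SUP x\<in>C. ennreal (f x \<omega>)"]
        SUP_eq by simp
  qed
  define r where "r = \<epsilon> / (8 * L * D)"
  define ex where "ex = exp (- (\<epsilon> ^ 2 * real M) / (2 * D ^ 4))"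
  have ex_pos: "ex > 0" by (simp add: ex_def)
  define S where "S = {n::nat. \<exists>A. A \<subseteq> E \<and> finite A \<and> card A \<le> n \<and> (\<forall>x\<in>E. \<exists>a\<in>A. \<delta> a x \<le> r)}"
  have cn: "covering_number E \<delta> r = (INF n\<in>S. enat n)"
    by (simp add: covering_number_def S_def)
  define B where "B = (\<lambda>a. {\<omega> \<in> space P. \<epsilon> / 2 \<le> f a \<omega>})"
  have B_sets: "B a \<in> sets P" if "a \<in> E" for a
    unfolding B_def using f_meas[OF that] by measurable
  have B_bound: "emeasure P (B a) \<le> ennreal (2 * ex)" if a: "a \<in> E" for a
  proof -
    interpret H: Hoeffding_ineq_iid P "{1..M}" "Z a" "Z a 1" 0 "D^2" "P.expectation (Z a 1)"
    proof unfold_locales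
      show "finite {1..M}" by simp
      show "P.indep_vars (\<lambda>_. borel) (Z a) {1..M}"
        unfolding Z_eq
        by (rule P.indep_vars_compose2[OF indep[OF a], where Y="\<lambda>_. h" and N="\<lambda>_. borel"])
           (rule h_meas)
      show "distr P borel (Z a m) = distr P borel (Z a 1)" if "m \<in> {1..M}" for m
      proof -
        have "distr P borel (Z a m) = distr (distr P borel (\<lambda>\<omega>. (X a m \<omega>, Y m \<omega>))) borel h"
          unfolding Z_eq by (subst distr_distr[OF h_meas pair_meas[OF a that]]) (simp add: comp_def)
        also have "\<dots> = distr (distr P borel (\<lambda>\<omega>. (X a 1 \<omega>, Y 1 \<omega>))) borel h"
          using ident[OF a that] by simp
        also have "\<dots> = distr P borel (Z a 1)"
          unfolding Z_eq by (subst distr_distr[OF h_meas pair_meas[OF a M1]]) (simp add: comp_def)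
        finally show ?thesis .
      qed
      show "P.random_variable borel (Z a 1)" by (rule Z_meas[OF a M1])
      show "AE \<omega> in P. Z a 1 \<omega> \<in> {0..D^2}"
        by (rule AE_I2) (rule Z_bd[OF a M1])
    qed
    have "P.prob {\<omega> \<in> space P. \<bar>(\<Sum>i\<in>{1..M}. Z a i \<omega>) / real (card {1..M}) - P.expectation (Z a 1)\<bar> \<ge> \<epsilon> / 2}
          \<le> 2 * exp (-2 * real (card {1..M}) * (\<epsilon> / 2)\<^sup>2 / (D^2 - 0)\<^sup>2)"
      by (rule H.Hoeffding_ineq_abs_ge') (use eps_pos D_pos M_pos in auto)
    moreover have "{\<omega> \<in> space P. \<bar>(\<Sum>i\<in>{1..M}. Z a i \<omega>) / real (card {1..M}) - P.expectation (Z a 1)\<bar> \<ge> \<epsilon> / 2} = B a"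
      by (simp add: B_def f_def emp_def gen_def Z_def)
    moreover have "exp (-2 * real (card {1..M}) * (\<epsilon> / 2)\<^sup>2 / (D^2 - 0)\<^sup>2) = ex"
      unfolding ex_def by (simp add: power2_eq_square field_simps power4_eq_xxxx)
    ultimately have "P.prob (B a) \<le> 2 * ex" by simp
    then show ?thesis
      by (simp add: P.emeasure_eq_measure ennreal_leI)
  qed
  have main: "emeasure P {\<omega> \<in> space P. (SUP x\<in>E. ennreal (f x \<omega>)) \<ge> ennreal \<epsilon>}
      \<le> of_nat (card A) * ennreal (2 * ex)"
    if A: "A \<subseteq> E" "finite A" "\<forall>x\<in>E. \<exists>a\<in>A. \<delta> a x \<le> r" for A
  proof -
    have sub: "{\<omega> \<in> space P. (SUP x\<in>E. ennreal (f x \<omega>)) \<ge> ennreal \<epsilon>} \<subseteq> (\<Union>a\<in>A. B a)"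
    proof
      fix \<omega> assume "\<omega> \<in> {\<omega> \<in> space P. (SUP x\<in>E. ennreal (f x \<omega>)) \<ge> ennreal \<epsilon>}"
      then have \<omega>: "\<omega> \<in> space P" and ge: "(SUP x\<in>E. ennreal (f x \<omega>)) \<ge> ennreal \<epsilon>" by auto
      show "\<omega> \<in> (\<Union>a\<in>A. B a)"
      proof (rule ccontr)
        assume "\<omega> \<notin> (\<Union>a\<in>A. B a)"
        then have lt: "\<forall>a\<in>A. f a \<omega> < \<epsilon> / 2" using \<omega> by (auto simp: B_def)
        obtain x0 where "x0 \<in> E" using nonempty by blast
        then have Ane: "A \<noteq> {}" using A(3) by blast
        define mx where "mx = Max ((\<lambda>a. f a \<omega>) ` A)"
        have mx_lt: "mx < \<epsilon> / 2" unfolding mx_def using lt Ane A(2) by (subst Max_less_iff) auto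
        have mx_ge: "f a \<omega> \<le> mx" if "a \<in> A" for a unfolding mx_def using that A(2) by simp
        have "(SUP x\<in>E. ennreal (f x \<omega>)) \<le> ennreal (mx + \<epsilon> / 2)"
        proof (rule SUP_least)
          fix x assume x: "x \<in> E"
          then obtain a where a: "a \<in> A" "\<delta> a x \<le> r" using A(3) by blast
          have aE: "a \<in> E" using a(1) A(1) by auto
          have "4 * D * L * \<delta> a x \<le> 4 * D * L * r"
            using a(2) D_pos L_pos by (intro mult_left_mono) auto
          also have "4 * D * L * r = \<epsilon> / 2" unfolding r_def using D_pos L_pos by (simp add: field_simps)
          finally have "f x \<omega> \<le> mx + \<epsilon> / 2"
            using f_lip[OF aE x \<omega>] mx_ge[OF a(1)] by linarith
          then show "ennreal (f x \<omega>) \<le> ennreal (mx + \<epsilon> / 2)" by (rule ennreal_leI)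
        qed
        also have "\<dots> < ennreal \<epsilon>"
          using mx_lt eps_pos by (intro ennreal_lessI) auto
        finally show False using ge by simp
      qed
    qed
    have "emeasure P {\<omega> \<in> space P. (SUP x\<in>E. ennreal (f x \<omega>)) \<ge> ennreal \<epsilon>} \<le> emeasure P (\<Union>a\<in>A. B a)"
      by (rule emeasure_mono[OF sub]) (use B_sets A(1,2) in \<open>auto intro!: sets.finite_UN\<close>)
    also have "\<dots> \<le> (\<Sum>a\<in>A. emeasure P (B a))"
      by (rule emeasure_subadditive_finite) (use B_sets A in auto)
    also have "\<dots> \<le> (\<Sum>a\<in>A. ennreal (2 * ex))"
      by (intro sum_mono B_bound) (use A(1) in auto)
    also have "\<dots> = of_nat (card A) * ennreal (2 * ex)" by simp
    finally show ?thesis .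
  qed
  have bound: "emeasure P {\<omega> \<in> space P. (SUP x\<in>E. ennreal (f x \<omega>)) \<ge> ennreal \<epsilon>}
      \<le> 2 * ennreal_of_enat (covering_number E \<delta> r) * ennreal ex"
  proof (cases "S = {}")
    case True
    then have "covering_number E \<delta> r = \<infinity>" by (simp add: cn top_enat_def)
    then have "2 * ennreal_of_enat (covering_number E \<delta> r) * ennreal ex = \<infinity>"
      using ex_pos by (simp add: ennreal_mult_eq_top_iff)
    then show ?thesis by simp
  next
    case False
    define n0 where "n0 = Inf S"
    have n0S: "n0 \<in> S" unfolding n0_def using False by (rule Inf_nat_def1)
    then obtain A where A: "A \<subseteq> E" "finite A" "card A \<le> n0" "\<forall>x\<in>E. \<exists>a\<in>A. \<delta> a x \<le> r"
      unfolding S_def by blast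
    have "covering_number E \<delta> r = enat n0"
    proof (rule antisym)
      show "covering_number E \<delta> r \<le> enat n0" unfolding cn by (rule INF_lower[OF n0S])
      show "enat n0 \<le> covering_number E \<delta> r" unfolding cn n0_def
        by (rule INF_greatest) (simp add: cInf_lower)
    qed
    then have cnv: "ennreal_of_enat (covering_number E \<delta> r) = of_nat n0" by simp
    have "emeasure P {\<omega> \<in> space P. (SUP x\<in>E. ennreal (f x \<omega>)) \<ge> ennreal \<epsilon>}
        \<le> of_nat (card A) * ennreal (2 * ex)" by (rule main[OF A(1,2,4)])
    also have "\<dots> = 2 * of_nat (card A) * ennreal ex"
      using ex_pos by (simp add: ennreal_mult mult_ac)
    also have "\<dots> \<le> 2 * of_nat n0 * ennreal ex"
      using A(3) by (intro mult_right_mono mult_left_mono) auto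
    finally show ?thesis unfolding cnv .
  qed
  show ?thesis
    using meas bound unfolding f_def r_def ex_def by simp
qed

end
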